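(* Assume $(\boldsymbol\lambda,\boldsymbol\mu)$ satisfies (H) (notation as there) and that there exists a good sequence $v_{\omega.\mu}=v_{\mathbf k_0}\overset{\bullet}{\to}\cdots\overset{\bullet}{\to}v_{\mathbf k_e}\overset{t}{\to}v_{\mathbf k_{e+1}}\overset{\bullet}{\to}\cdots\overset{\bullet}{\to}v_{\mathbf k_N}=v_\lambda$ with respect to $(\lambda,\mu)$, where $t\in\{2,3,4\}$ is the index of the rule used at the unique step with $m=1$. Then this good sequence is unique, $t$ is uniquely determined, $(\gamma,\delta)\neq(0,0)$, and $h\equiv\eta\pmod{nl}$ for some $\eta\in\{0,\gamma,\delta,\gamma+\delta\}$.
   Context: Fix $n,l,m\ge1$, $\mathbf s_l=(s_1,\dots,s_l)\in\mathbb Z^l$, $s=\sum s_b$. Each $k\in\mathbb Z$ is uniquely $k=c(k)+n(d(k)-1)+nl\,m(k)$, $c(k)\in\{1..n\}$, $d(k)\in\{1..l\}$; $\phi(k)=c(k)+n\,m(k)$. $\Pi^l_m$ = $l$-tuples of partitions of total size $m$; $\boldsymbol\lambda\leftrightarrow\lambda$ iff $\{(\lambda^{(b)}_i+s_b+1-i,b)\}=\{(\phi(k),d(k)):k\in\{\lambda_i+s+1-i:i\ge1\}\}$; $\boldsymbol\lambda\prec\boldsymbol\mu$ iff $\lambda\lhd\mu$ (strict dominance). For $|\lambda|=r$, $\boldsymbol\beta(\lambda)=(\lambda_i+s+1-i)_{i\le r}$, $B(\lambda)$ its set. (H): $\boldsymbol\lambda,\boldsymbol\mu\in\Pi^l_m$,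 $\boldsymbol\lambda\leftrightarrow\lambda$, $\boldsymbol\mu\leftrightarrow\mu$, $\boldsymbol\lambda\prec\boldsymbol\mu$, $|\lambda|=|\mu|=r$, $\#(B(\lambda)\cap B(\mu))=r-2$. Under (H): $\boldsymbol\beta(\mu)=(\beta_i)$; $\lambda/(\lambda\cap\mu)$, $\mu/(\lambda\cap\mu)$ are ribbons of a common length $h$; $x$ is the row of the head of $\lambda/(\lambda\cap\mu)$, $y$ the row of the tail of $\mu/(\lambda\cap\mu)$; $B(\lambda)=(B(\mu)\setminus\{\beta_x,\beta_y\})\cup\{\beta_x+h,\beta_y-h\}$; $\gamma,\delta\in\{0..nl-1\}$ are the residues mod $nl$ of $c(\beta_y)-c(\beta_x)$ and $n(d(\beta_y)-d(\beta_x))$. Wedge space (Uglov): $\mathbb C(q)$-span of $v_{k_1}\wedge v_{k_2}\wedge\cdots$ ($k_i=s+1-i$ for $i\gg0$) with basis the ordered symbols; an adjacent pair $v_{k_1}\wedge v_{k_2}$, $k_1\le k_2$, is straightened by (with $\gamma',\delta'$ the residues mod $nl$ of $c(k_2)-c(k_1)$, $n(d(k_2)-d(k_1))$; sums over $i$ giving ordered two-factor wedges): (R1) $\gamma'=\delta'=0$: $v_{k_1}\wedge v_{k_2}=-v_{k_2}\wedge v_{k_1}$. (R2) $\gamma'>0,\delta'=0$: $=-q^{-1}v_{k_2}\wedge v_{k_1}-(q^{-2}-1)\sum_{i\ge1}q^{-2i+1}v_{k_2-nli}\wedge v_{k_1+nli}+(q^{-2}-1)\sum_{i\ge0}q^{-2i}v_{k_2-\gamma'-nli}\wedge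 v_{k_1+\gamma'+nli}$. (R3) $\gamma'=0,\delta'>0$: $=-qv_{k_2}\wedge v_{k_1}-(q^2-1)\sum_{i\ge1}q^{2i-1}v_{k_2-nli}\wedge v_{k_1+nli}+(q^2-1)\sum_{i\ge0}q^{2i}v_{k_2-\delta'-nli}\wedge v_{k_1+\delta'+nli}$. (R4) $\gamma',\delta'>0$: $=-v_{k_2}\wedge v_{k_1}-(q-q^{-1})\sum_{i\ge1}\frac{q^{2i}-q^{-2i}}{q+q^{-1}}v_{k_2-nli}\wedge v_{k_1+nli}-(q-q^{-1})\sum_{i\ge0}\frac{q^{2i+1}+q^{-2i-1}}{q+q^{-1}}v_{k_2-\gamma'-nli}\wedge v_{k_1+\gamma'+nli}+(q-q^{-1})\sum_{i\ge0}\frac{q^{2i+1}+q^{-2i-1}}{q+q^{-1}}v_{k_2-\delta'-nli}\wedge v_{k_1+\delta'+nli}+(q-q^{-1})\sum_{i\ge0}\frac{q^{2i+2}-q^{-2i-2}}{q+q^{-1}}v_{k_2-\gamma'-\delta'-nli}\wedge v_{k_1+\gamma'+\delta'+nli}$. Sequences: wedges $v_{\mathbf k}$ with first $r$ indices $\mathbf k$ and fixed tail $s-r,s-r-1,\dots$; $\sigma.(k_1,\dots,k_r)=(k_{\sigma^{-1}(1)},\dots)$; $\omega$ longest element; $v_\lambda=v_{\boldsymbol\beta(\lambda)}$, $v_{\omega.\mu}=v_{\omega.\boldsymbol\beta(\mu)}$. $v_{\mathbf k}\to v_{\mathbf l}$ if there is $i$ with $k_i\le k_{i+1}$, $k_j>k_{j+1}$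 for $j<i$, $k_j=l_j$ for $j\notin\{i,i+1\}$, and $v_{l_i}\wedge v_{l_{i+1}}$ has nonzero coefficient in the straightening of $v_{k_i}\wedge v_{k_{i+1}}$ by the applicable rule $(R_t)$; written $\overset{\bullet}{\to}$ (with $m=0$) if $(l_i,l_{i+1})=(k_{i+1},k_i)$, else $\overset{t}{\to}$ (with $m=1$). A good sequence for $(\lambda,\mu)$ is a chain $v_{\omega.\mu}\to\cdots\to v_\lambda$ with total $m$ equal to $1$. *)

theory Defs
  imports "HOL-Computational_Algebra.Polynomial" "HOL-Computational_Algebra.Fraction_Field"
begin

section \<open>Decomposition of integers k = c(k) + n(d(k)-1) + nl m(k)\<close>

definition cc :: "nat \<Rightarrow> int \<Rightarrow> int" where
  "cc n k = (k - 1) mod int n + 1"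

definition dd :: "nat \<Rightarrow> nat \<Rightarrow> int \<Rightarrow> int" where
  "dd n l k = ((k - 1) div int n) mod int l + 1"

definition mm :: "nat \<Rightarrow> nat \<Rightarrow> int \<Rightarrow> int" where
  "mm n l k = (k - 1) div (int n * int l)"

definition phi :: "nat \<Rightarrow> nat \<Rightarrow> int \<Rightarrow> int" where
  "phi n l k = cc n k + int n * mm n l k"

definition is_partition :: "nat list \<Rightarrow> bool" where
  "is_partition p \<longleftrightarrow> sorted_wrt (\<ge>) p \<and> (\<forall>x\<in>set p. 0 < x)"

definition part :: "nat list \<Rightarrow> nat \<Rightarrow> nat" where
  "part p i = (if 1 \<le> i \<and> i \<le> length p then p ! (i - 1) else 0)"

definition psize :: "nat list \<Rightarrow> nat" where
  "psize p = sum_list p"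

definition multipartitions :: "nat \<Rightarrow> nat \<Rightarrow> nat list list set" where
  "multipartitions l m = {bl. length bl = l \<and> (\<forall>p\<in>set bl. is_partition p)
        \<and> sum_list (map psize bl) = m}"

definition dominates :: "nat list \<Rightarrow> nat list \<Rightarrow> bool" where
  "dominates lam mu \<longleftrightarrow> psize lam = psize mu \<and>
     (\<forall>k. (\<Sum>i=1..k. part lam i) \<le> (\<Sum>i=1..k. part mu i))"

definition strictly_dominated :: "nat list \<Rightarrow> nat list \<Rightarrow> bool" where
  "strictly_dominated lam mu \<longleftrightarrow> dominates lam mu \<and> lam \<noteq> mu"

definition corr :: "nat \<Rightarrow> nat \<Rightarrow> int list \<Rightarrow> nat list list \<Rightarrow> nat list \<Rightarrow> bool" where
  "corr n l sl bl lam \<longleftrightarrow> is_partition lam \<and>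
     {(int (part (bl ! (b - 1)) i) + sl ! (b - 1) + 1 - int i, int b) | i b.
         1 \<le> i \<and> 1 \<le> b \<and> b \<le> l}
   = {(phi n l k, dd n l k) | k.
         k \<in> {int (part lam i) + sum_list sl + 1 - int i | i. 1 \<le> i}}"

definition mp_prec :: "nat \<Rightarrow> nat \<Rightarrow> int list \<Rightarrow> nat list list \<Rightarrow> nat list list \<Rightarrow> bool" where
  "mp_prec n l sl bl bm \<longleftrightarrow> (\<exists>lam mu. corr n l sl bl lam \<and> corr n l sl bm mu
       \<and> strictly_dominated lam mu)"

definition beta :: "int \<Rightarrow> nat list \<Rightarrow> int list" where
  "beta s lam = map (\<lambda>i. int (part lam i) + s + 1 - int i) [1..<psize lam + 1]"

definition diagram :: "nat list \<Rightarrow> (nat \<times> nat) set" where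
  "diagram p = {(i, j). 1 \<le> i \<and> 1 \<le> j \<and> j \<le> part p i}"

definition skew :: "nat list \<Rightarrow> nat list \<Rightarrow> (nat \<times> nat) set" where
  "skew lam mu = diagram lam - diagram mu"

definition ribbon_len :: "nat list \<Rightarrow> nat list \<Rightarrow> nat" where
  "ribbon_len lam mu = card (skew lam mu)"

text \<open>row of the head (south-west end cell, i.e. lowest row) of a ribbon, and
  row of the tail (north-east end cell, i.e. highest row) of a ribbon\<close>
definition head_row :: "(nat \<times> nat) set \<Rightarrow> nat" where
  "head_row R = Max (fst ` R)"

definition tail_row :: "(nat \<times> nat) set \<Rightarrow> nat" where
  "tail_row R = Min (fst ` R)"

definition qq :: "complex poly fract" where
  "qq = Fract [:0, 1:] 1"

definition gam' :: "nat \<Rightarrow> nat \<Rightarrow> int \<Rightarrow> int \<Rightarrow> int" where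
  "gam' n l k1 k2 = (cc n k2 - cc n k1) mod (int n * int l)"

definition del' :: "nat \<Rightarrow> nat \<Rightarrow> int \<Rightarrow> int \<Rightarrow> int" where
  "del' n l k1 k2 = (int n * (dd n l k2 - dd n l k1)) mod (int n * int l)"

text \<open>index t of the rule (R_t) applicable to v_k1 wedge v_k2\<close>
definition rule_idx :: "nat \<Rightarrow> nat \<Rightarrow> int \<Rightarrow> int \<Rightarrow> nat" where
  "rule_idx n l k1 k2 =
     (if gam' n l k1 k2 = 0 \<and> del' n l k1 k2 = 0 then 1
      else if del' n l k1 k2 = 0 then 2
      else if gam' n l k1 k2 = 0 then 3 else 4)"

text \<open>coefficient of v_a wedge v_b contributed by a sum
  sum_{i >= lo} f(i) v_{k2 - sh - nli} wedge v_{k1 + sh + nli},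
  where only ordered wedges (first index > second index) occur\<close>
definition ssum :: "nat \<Rightarrow> nat \<Rightarrow> int \<Rightarrow> int \<Rightarrow> nat \<Rightarrow> int \<Rightarrow> (nat \<Rightarrow> complex poly fract)
                     \<Rightarrow> int \<Rightarrow> int \<Rightarrow> complex poly fract" where
  "ssum n l k1 k2 lo sh f a b =
     (\<Sum>i\<in>{i::nat. lo \<le> i \<and> a = k2 - sh - int n * int l * int i
                   \<and> b = k1 + sh + int n * int l * int i \<and> b < a}. f i)"

text \<open>coefficient of v_a wedge v_b in the straightening of v_k1 wedge v_k2 (k1 \<le> k2)\<close>
definition straight_coeff :: "nat \<Rightarrow> nat \<Rightarrow> int \<Rightarrow> int \<Rightarrow> int \<Rightarrow> int \<Rightarrow> complex poly fract" where
  "straight_coeff n l k1 k2 a b =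
    (let g = gam' n l k1 k2; dl = del' n l k1 k2; q = qq;
         lead = (if a = k2 \<and> b = k1 then 1 else 0);
         S = (\<lambda>lo sh f. ssum n l k1 k2 lo sh f a b) in
     if rule_idx n l k1 k2 = 1 then - lead
     else if rule_idx n l k1 k2 = 2 then
       - inverse q * lead
       - (q powi (-2) - 1) * S 1 0 (\<lambda>i. q powi (- 2 * int i + 1))
       + (q powi (-2) - 1) * S 0 g (\<lambda>i. q powi (- 2 * int i))
     else if rule_idx n l k1 k2 = 3 then
       - q * lead
       - (q ^ 2 - 1) * S 1 0 (\<lambda>i. q powi (2 * int i - 1))
       + (q ^ 2 - 1) * S 0 dl (\<lambda>i. q powi (2 * int i))
     else
       - lead
       - (q - inverse q) * S 1 0
            (\<lambda>i. (q powi (2 * int i) - q powi (- 2 * int i)) / (q + inverse q))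
       - (q - inverse q) * S 0 g
            (\<lambda>i. (q powi (2 * int i + 1) + q powi (- 2 * int i - 1)) / (q + inverse q))
       + (q - inverse q) * S 0 dl
            (\<lambda>i. (q powi (2 * int i + 1) + q powi (- 2 * int i - 1)) / (q + inverse q))
       + (q - inverse q) * S 0 (g + dl)
            (\<lambda>i. (q powi (2 * int i + 2) - q powi (- 2 * int i - 2)) / (q + inverse q)))"

section \<open>Sequences of wedges (first r indices; the tail s-r, s-r-1, ... is fixed)\<close>

definition first_nondesc :: "int list \<Rightarrow> nat" where
  "first_nondesc kk = (LEAST i. kk ! i \<le> kk ! Suc i)"

definition wstep :: "nat \<Rightarrow> nat \<Rightarrow> int list \<Rightarrow> int list \<Rightarrow> bool" where
  "wstep n l kk ll \<longleftrightarrow> (\<exists>i. Suc i < length kk \<and> length ll = length kk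
      \<and> kk ! i \<le> kk ! Suc i \<and> (\<forall>j<i. kk ! Suc j < kk ! j)
      \<and> (\<forall>j<length kk. j \<noteq> i \<and> j \<noteq> Suc i \<longrightarrow> ll ! j = kk ! j)
      \<and> straight_coeff n l (kk ! i) (kk ! Suc i) (ll ! i) (ll ! Suc i) \<noteq> 0)"

text \<open>label of a step: 0 for a bullet step (m = 0), otherwise the index t of the rule (m = 1)\<close>
definition step_label :: "nat \<Rightarrow> nat \<Rightarrow> int list \<Rightarrow> int list \<Rightarrow> nat" where
  "step_label n l kk ll =
     (let i = first_nondesc kk in
      if ll ! i = kk ! Suc i \<and> ll ! Suc i = kk ! i then 0
      else rule_idx n l (kk ! i) (kk ! Suc i))"

text \<open>good sequence v_{omega.mu} \<rightarrow> ... \<rightarrow> v_lam with total m equal to 1\<close>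
definition good_seq :: "nat \<Rightarrow> nat \<Rightarrow> int \<Rightarrow> nat list \<Rightarrow> nat list \<Rightarrow> int list list \<Rightarrow> bool" where
  "good_seq n l s lam mu ks \<longleftrightarrow> ks \<noteq> [] \<and> hd ks = rev (beta s mu) \<and> last ks = beta s lam
     \<and> (\<forall>j. Suc j < length ks \<longrightarrow> wstep n l (ks ! j) (ks ! Suc j))
     \<and> card {j. Suc j < length ks \<and> step_label n l (ks ! j) (ks ! Suc j) \<noteq> 0} = 1"

end

theory Submission
  imports Defs
begin

definition swp :: "int list \<Rightarrow> nat \<Rightarrow> int list" where
  "swp kk i = kk[i := kk ! Suc i, Suc i := kk ! i]"

lemma fnd_eq:
  assumes "kk ! i \<le> kk ! Suc i" "\<forall>j<i. kk ! Suc j < kk ! j"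
  shows "first_nondesc kk = i"
  unfolding first_nondesc_def
proof (rule Least_equality)
  show "kk ! i \<le> kk ! Suc i" by fact
next
  fix j assume "kk ! j \<le> kk ! Suc j"
  then show "i \<le> j" using assms(2) by (meson leD not_le_imp_less)
qed

lemma wstep_facts:
  assumes "wstep n l kk ll"
  defines "i \<equiv> first_nondesc kk"
  shows "Suc i < length kk \<and> length ll = length kk \<and> kk ! i \<le> kk ! Suc i
    \<and> (\<forall>j<i. kk ! Suc j < kk ! j)
    \<and> ll = kk[i := ll ! i, Suc i := ll ! Suc i]
    \<and> straight_coeff n l (kk ! i) (kk ! Suc i) (ll ! i) (ll ! Suc i) \<noteq> 0"
proof -
  obtain i' where h: "Suc i' < length kk" "length ll = length kk"
      "kk ! i' \<le> kk ! Suc i'" "\<forall>j<i'. kk ! Suc j < kk ! j"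
      "\<forall>j<length kk. j \<noteq> i' \<and> j \<noteq> Suc i' \<longrightarrow> ll ! j = kk ! j"
      "straight_coeff n l (kk ! i') (kk ! Suc i') (ll ! i') (ll ! Suc i') \<noteq> 0"
    using assms(1) unfolding wstep_def by blast
  have ii: "i = i'" unfolding i_def using fnd_eq h(3,4) by blast
  have "ll = kk[i := ll ! i, Suc i := ll ! Suc i]"
    by (rule nth_equalityI) (use h ii in \<open>auto simp: nth_list_update\<close>)
  then show ?thesis using h ii by simp
qed

lemma label_zero_iff:
  assumes "wstep n l kk ll"
  shows "step_label n l kk ll = 0 \<longleftrightarrow> ll = swp kk (first_nondesc kk)"
proof -
  let ?i = "first_nondesc kk"
  have f: "Suc ?i < length kk" "length ll = length kk"
    "ll = kk[?i := ll ! ?i, Suc ?i := ll ! Suc ?i]"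
    using wstep_facts[OF assms] by auto
  have r: "rule_idx n l a b \<noteq> 0" for a b unfolding rule_idx_def by auto
  show ?thesis
  proof
    assume "step_label n l kk ll = 0"
    then have "ll ! ?i = kk ! Suc ?i \<and> ll ! Suc ?i = kk ! ?i"
      using r[of "kk ! ?i" "kk ! Suc ?i"] unfolding step_label_def Let_def by (auto split: if_splits)
    then show "ll = swp kk ?i" using f unfolding swp_def by metis
  next
    assume "ll = swp kk ?i"
    then show "step_label n l kk ll = 0" using f unfolding swp_def step_label_def Let_def
      by (auto simp: nth_list_update)
  qed
qed

lemma label_nz:
  assumes "wstep n l kk ll" "step_label n l kk ll \<noteq> 0"
  shows "step_label n l kk ll = rule_idx n l (kk ! first_nondesc kk) (kk ! Suc (first_nondesc kk))
     \<and> \<not> (ll ! first_nondesc kk = kk ! Suc (first_nondesc kk) \<and> ll ! Suc (first_nondesc kk) = kk ! first_nondesc kk)"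
  using assms unfolding step_label_def Let_def by (auto split: if_splits)

lemma ssum_zero:
  assumes "\<forall>i::nat. lo \<le> i \<longrightarrow> \<not> (a = k2 - sh - int n * int l * int i
                   \<and> b = k1 + sh + int n * int l * int i \<and> b < a)"
  shows "ssum n l k1 k2 lo sh f a b = 0"
proof -
  have "{i::nat. lo \<le> i \<and> a = k2 - sh - int n * int l * int i
                   \<and> b = k1 + sh + int n * int l * int i \<and> b < a} = {}"
    using assms by blast
  then show ?thesis unfolding ssum_def by (metis sum.empty)
qed

lemma coeff_nz:
  assumes n: "1 \<le> n" and l: "1 \<le> l"
    and nz: "straight_coeff n l k1 k2 a b \<noteq> 0" and nl: "\<not> (a = k2 \<and> b = k1)"
  shows "rule_idx n l k1 k2 \<noteq> 1 \<and> (\<exists>sh (i::nat). sh \<in> {0, gam' n l k1 k2, del' n l k1 k2,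
            gam' n l k1 k2 + del' n l k1 k2}
       \<and> 0 < sh + int n * int l * int i \<and> a = k2 - sh - int n * int l * int i
       \<and> b = k1 + sh + int n * int l * int i \<and> b < a)"
proof (rule ccontr)
  define g where "g = gam' n l k1 k2"
  define dl where "dl = del' n l k1 k2"
  have Np: "0 < int n * int l" using n l by simp
  have g0: "0 \<le> g" unfolding g_def gam'_def by (rule pos_mod_sign[OF Np])
  have d0: "0 \<le> dl" unfolding dl_def del'_def by (rule pos_mod_sign[OF Np])
  assume "\<not> ?thesis"
  then have H: "rule_idx n l k1 k2 = 1 \<or> \<not> (\<exists>sh (i::nat). sh \<in> {0, g, dl, g + dl}
       \<and> 0 < sh + int n * int l * int i \<and> a = k2 - sh - int n * int l * int i
       \<and> b = k1 + sh + int n * int l * int i \<and> b < a)" unfolding g_def dl_def by blast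
  have lead: "(if a = k2 \<and> b = k1 then 1 else 0) = (0::complex poly fract)" using nl by simp
  show False
  proof (cases "rule_idx n l k1 k2 = 1")
    case True
    then have "straight_coeff n l k1 k2 a b = 0" unfolding straight_coeff_def Let_def using lead by simp
    then show False using nz by simp
  next
    case False
    then have H: "\<not> (\<exists>sh (i::nat). sh \<in> {0, g, dl, g + dl}
       \<and> 0 < sh + int n * int l * int i \<and> a = k2 - sh - int n * int l * int i
       \<and> b = k1 + sh + int n * int l * int i \<and> b < a)" using H by simp
    have z10: "ssum n l k1 k2 1 0 f a b = 0" for f
    proof (rule ssum_zero, intro allI impI)
      fix i :: nat assume "1 \<le> i"
      then have "0 < 0 + int n * int l * int i" using Np by simp
      then show "\<not> (a = k2 - 0 - int n * int l * int i \<and> b = k1 + 0 + int n * int l * int i \<and> b < a)"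
        using H by blast
    qed
    have zs: "ssum n l k1 k2 0 sh f a b = 0" if "sh \<in> {g, dl, g + dl}" "0 < sh" for f sh
    proof (rule ssum_zero, intro allI impI)
      fix i :: nat
      have "0 \<le> int n * int l * int i" using Np by simp
      then have "0 < sh + int n * int l * int i" using that by linarith
      then show "\<not> (a = k2 - sh - int n * int l * int i \<and> b = k1 + sh + int n * int l * int i \<and> b < a)"
        using H that(1) by blast
    qed
    show False
    proof (cases "rule_idx n l k1 k2 = 2")
      case True
      then have "dl = 0" "g \<noteq> 0" unfolding rule_idx_def g_def dl_def by (auto split: if_splits)
      then have "0 < g" using g0 by simp
      then have "straight_coeff n l k1 k2 a b = 0"
        unfolding straight_coeff_def Let_def using lead True z10 zs[of g] by (simp add: g_def)
      then show False using nz by simp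
    next
      case F2: False
      show False
      proof (cases "rule_idx n l k1 k2 = 3")
        case True
        then have "g = 0" "dl \<noteq> 0" unfolding rule_idx_def g_def dl_def by (auto split: if_splits)
        then have "0 < dl" using d0 by simp
        then have "straight_coeff n l k1 k2 a b = 0"
          unfolding straight_coeff_def Let_def using lead True z10 zs[of dl] F2 by (simp add: dl_def)
        then show False using nz by simp
      next
        case F3: False
        then have "g \<noteq> 0" "dl \<noteq> 0" using False F2 unfolding rule_idx_def g_def dl_def by (auto split: if_splits)
        then have "0 < g" "0 < dl" "0 < g + dl" using g0 d0 by simp_all
        then have "straight_coeff n l k1 k2 a b = 0"
          unfolding straight_coeff_def Let_def using lead z10 zs[of g] zs[of dl] zs[of "g+dl"] F2 F3 False
          by (simp add: dl_def g_def)
        then show False using nz by simp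
      qed
    qed
  qed
qed

lemma dec_less_iff:
  assumes "sorted_wrt (>) (X::int list)" "i < length X" "j < length X"
  shows "X ! i < X ! j \<longleftrightarrow> j < i"
proof -
  have s: "\<And>a b. a < b \<Longrightarrow> b < length X \<Longrightarrow> X ! b < X ! a"
    using assms(1) by (simp add: sorted_wrt_iff_nth_less)
  show ?thesis
  proof
    assume "X ! i < X ! j"
    then show "j < i" using s[of i j] assms(2,3) by (metis less_asym less_irrefl linorder_neqE_nat)
  next
    assume "j < i" then show "X ! i < X ! j" using s assms by blast
  qed
qed

lemma dec_inj:
  assumes "sorted_wrt (>) (X::int list)"
  shows "inj_on ((!) X) {..<length X}"
proof (rule inj_onI)
  fix i j assume "i \<in> {..<length X}" "j \<in> {..<length X}" "X ! i = X ! j"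
  then show "i = j" using dec_less_iff[OF assms, of i j] dec_less_iff[OF assms, of j i]
    by (metis lessThan_iff order_less_irrefl linorder_neqE_nat)
qed

lemma dec_distinct:
  assumes "sorted_wrt (>) (X::int list)"
  shows "distinct X"
  using dec_inj[OF assms] unfolding distinct_conv_nth inj_on_def by (metis lessThan_iff)

lemma dec_card_gt:
  assumes "sorted_wrt (>) (X::int list)" "i < length X"
  shows "card {z \<in> set X. X ! i < z} = i"
proof -
  have "{z \<in> set X. X ! i < z} = (!) X ` {..<i}"
  proof
    show "{z \<in> set X. X ! i < z} \<subseteq> (!) X ` {..<i}"
    proof
      fix z assume "z \<in> {z \<in> set X. X ! i < z}"
      then obtain j where "j < length X" "z = X ! j" "X ! i < X ! j" by (auto simp: in_set_conv_nth)
      then show "z \<in> (!) X ` {..<i}" using dec_less_iff[OF assms(1,2)] by auto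
    qed
  next
    show "(!) X ` {..<i} \<subseteq> {z \<in> set X. X ! i < z}"
      using dec_less_iff[OF assms(1,2)] assms(2) by auto
  qed
  moreover have "inj_on ((!) X) {..<i}" using dec_inj[OF assms(1)] assms(2)
    by (meson inj_on_subset lessThan_subset_iff less_imp_le)
  ultimately show ?thesis by (simp add: card_image)
qed

lemma dec_card_ge:
  assumes "sorted_wrt (>) (X::int list)" "i < length X"
  shows "card {z \<in> set X. X ! i \<le> z} = Suc i"
proof -
  have "{z \<in> set X. X ! i \<le> z} = insert (X ! i) {z \<in> set X. X ! i < z}"
    using assms(2) by auto
  then show ?thesis using dec_card_gt[OF assms] by simp
qed

lemma dec_ge_iff:
  assumes "sorted_wrt (>) (X::int list)" "i < length X"
  shows "w \<le> X ! i \<longleftrightarrow> i < card {z \<in> set X. w \<le> z}"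
proof
  assume "w \<le> X ! i"
  then have "{z \<in> set X. X ! i \<le> z} \<subseteq> {z \<in> set X. w \<le> z}" by auto
  then have "card {z \<in> set X. X ! i \<le> z} \<le> card {z \<in> set X. w \<le> z}"
    by (rule card_mono[rotated]) simp
  then show "i < card {z \<in> set X. w \<le> z}" using dec_card_ge[OF assms] by simp
next
  assume a: "i < card {z \<in> set X. w \<le> z}"
  show "w \<le> X ! i"
  proof (rule ccontr)
    assume "\<not> w \<le> X ! i"
    then have "{z \<in> set X. w \<le> z} \<subseteq> {z \<in> set X. X ! i < z}" by auto
    then have "card {z \<in> set X. w \<le> z} \<le> card {z \<in> set X. X ! i < z}"
      by (rule card_mono[rotated]) simp
    then show False using a dec_card_gt[OF assms] by simp
  qed
qed

lemma cnt_insert: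
  assumes "finite S" "x \<notin> S"
  shows "card {z \<in> insert x S. w \<le> z} = card {z \<in> S. w \<le> (z::int)} + (if w \<le> x then 1 else 0)"
proof (cases "w \<le> x")
  case True
  then have "{z \<in> insert x S. w \<le> z} = insert x {z \<in> S. w \<le> z}" by auto
  then show ?thesis using assms True by simp
next
  case False
  then have "{z \<in> insert x S. w \<le> z} = {z \<in> S. w \<le> z}" by auto
  then show ?thesis using False by simp
qed

lemma cnt_two:
  assumes "finite Bl" "finite Bm" "Bl \<union> {u, v} = Bm \<union> {a, b}"
    "u \<notin> Bl" "v \<notin> Bl" "a \<notin> Bm" "b \<notin> Bm" "u \<noteq> v" "a \<noteq> b"
  shows "int (card {z \<in> Bl. w \<le> z}) + (if w \<le> u then 1 else 0) + (if w \<le> v then 1 else 0)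
       = int (card {z \<in> Bm. w \<le> (z::int)}) + (if w \<le> a then 1 else 0) + (if w \<le> b then 1 else 0)"
proof -
  have e1: "Bl \<union> {u, v} = insert u (insert v Bl)" by auto
  have e2: "Bm \<union> {a, b} = insert a (insert b Bm)" by auto
  have c1: "card {z \<in> Bl \<union> {u, v}. w \<le> z} = card {z \<in> Bl. w \<le> z} + (if w \<le> v then 1 else 0) + (if w \<le> u then 1 else 0)"
    unfolding e1 using cnt_insert[of "insert v Bl" u w] cnt_insert[of Bl v w] assms(1,4,5,8) by simp
  have c2: "card {z \<in> Bm \<union> {a, b}. w \<le> z} = card {z \<in> Bm. w \<le> z} + (if w \<le> b then 1 else 0) + (if w \<le> a then 1 else 0)"
    unfolding e2 using cnt_insert[of "insert b Bm" a w] cnt_insert[of Bm b w] assms(2,6,7,9) by simp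
  have eq: "card {z \<in> Bl \<union> {u, v}. w \<le> z} = card {z \<in> Bm \<union> {a, b}. w \<le> z}"
    using assms(3) by simp
  have "card {z \<in> Bl. w \<le> z} + (if w \<le> v then 1 else 0) + (if w \<le> u then 1 else 0)
      = card {z \<in> Bm. w \<le> z} + (if w \<le> b then 1 else 0) + (if w \<le> a then 1 else 0)"
    using c1 c2 eq by linarith
  then show ?thesis by (simp split: if_splits)
qed

lemma part_zero: "length p < i \<Longrightarrow> part p i = 0"
  unfolding part_def by simp

lemma part_mono:
  assumes "is_partition p" "1 \<le> i" "i \<le> j"
  shows "part p j \<le> part p i"
proof (cases "j \<le> length p")
  case True
  have s: "sorted_wrt (\<ge>) p" using assms(1) unfolding is_partition_def by simp
  have "p ! (j - 1) \<le> p ! (i - 1)"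
  proof (cases "i = j")
    case False
    then show ?thesis using sorted_wrt_nth_less[OF s, of "i - 1" "j - 1"] True assms(2,3) by simp
  qed simp
  then show ?thesis unfolding part_def using True assms(2,3) by simp
next
  case False
  then show ?thesis unfolding part_def by simp
qed

lemma len_le_psize:
  assumes "is_partition p"
  shows "length p \<le> psize p"
proof -
  have "\<forall>x\<in>set p. 0 < x" using assms unfolding is_partition_def by simp
  then have "length p \<le> sum_list p"
    by (induction p) auto
  then show ?thesis unfolding psize_def by simp
qed

lemma beta_len: "length (beta s p) = psize p"
  unfolding beta_def by simp

lemma beta_nth: "i < psize p \<Longrightarrow> beta s p ! i = int (part p (Suc i)) + s + 1 - int (Suc i)"
  unfolding beta_def by (simp del: upt_Suc)

lemma beta_dec:
  assumes "is_partition p"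
  shows "sorted_wrt (>) (beta s p)"
proof (subst sorted_wrt_iff_nth_less, intro allI impI)
  fix i j assume "i < j" "j < length (beta s p)"
  then have "j < psize p" by (simp add: beta_len)
  moreover have "part p (Suc j) \<le> part p (Suc i)" using part_mono[OF assms, of "Suc i" "Suc j"] \<open>i < j\<close> by simp
  ultimately show "beta s p ! j < beta s p ! i" using beta_nth[of j p s] beta_nth[of i p s] \<open>i < j\<close> by simp
qed

lemma skew_eq:
  assumes "is_partition lam" "psize lam = r"
  shows "skew lam mu = Sigma (Suc ` {i. i < r \<and> part mu (Suc i) < part lam (Suc i)})
             (\<lambda>i. {part mu i <.. part lam i})"
proof -
  have ll: "length lam \<le> r" using len_le_psize[OF assms(1)] assms(2) by simp
  show ?thesis
  proof (rule set_eqI, clarify)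
    fix i j
    show "((i, j) \<in> skew lam mu) = ((i, j) \<in> Sigma (Suc ` {i. i < r \<and> part mu (Suc i) < part lam (Suc i)})
             (\<lambda>i. {part mu i <.. part lam i}))"
    proof
      assume h: "(i, j) \<in> skew lam mu"
      then have h1: "1 \<le> i" "1 \<le> j" "j \<le> part lam i" "\<not> j \<le> part mu i"
        unfolding skew_def diagram_def by auto
      then have "i \<le> r" using part_zero[of lam i] ll by (cases "length lam < i") auto
      then show "(i, j) \<in> Sigma (Suc ` {i. i < r \<and> part mu (Suc i) < part lam (Suc i)})
             (\<lambda>i. {part mu i <.. part lam i})"
        using h1 by (auto intro!: image_eqI[of _ _ "i - 1"])
    next
      assume "(i, j) \<in> Sigma (Suc ` {i. i < r \<and> part mu (Suc i) < part lam (Suc i)})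
             (\<lambda>i. {part mu i <.. part lam i})"
      then show "(i, j) \<in> skew lam mu" unfolding skew_def diagram_def by auto
    qed
  qed
qed

lemma fst_skew:
  assumes "is_partition lam" "psize lam = r"
  shows "fst ` skew lam mu = Suc ` {i. i < r \<and> part mu (Suc i) < part lam (Suc i)}"
proof
  show "fst ` skew lam mu \<subseteq> Suc ` {i. i < r \<and> part mu (Suc i) < part lam (Suc i)}"
    unfolding skew_eq[OF assms] by auto
next
  show "Suc ` {i. i < r \<and> part mu (Suc i) < part lam (Suc i)} \<subseteq> fst ` skew lam mu"
  proof
    fix x assume "x \<in> Suc ` {i. i < r \<and> part mu (Suc i) < part lam (Suc i)}"
    then have "(x, part lam x) \<in> skew lam mu" unfolding skew_eq[OF assms] by auto
    then show "x \<in> fst ` skew lam mu" by force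
  qed
qed

lemma card_skew:
  assumes "is_partition lam" "psize lam = r"
  shows "card (skew lam mu) = (\<Sum>i\<in>{i. i < r \<and> part mu (Suc i) < part lam (Suc i)}.
            part lam (Suc i) - part mu (Suc i))"
proof -
  have "card (skew lam mu) = (\<Sum>i\<in>Suc ` {i. i < r \<and> part mu (Suc i) < part lam (Suc i)}. card {part mu i <.. part lam i})"
    unfolding skew_eq[OF assms] by (rule card_SigmaI) auto
  also have "\<dots> = (\<Sum>i\<in>{i. i < r \<and> part mu (Suc i) < part lam (Suc i)}. part lam (Suc i) - part mu (Suc i))"
    by (subst sum.reindex) auto
  finally show ?thesis .
qed

lemma geom:
  fixes s u v a b :: int
  assumes pl: "is_partition lam" and pm: "is_partition mu"
    and rl: "psize lam = r" and rm: "psize mu = r"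
    and U: "set (beta s lam) \<union> {u, v} = set (beta s mu) \<union> {a, b}"
    and nu: "u \<notin> set (beta s lam)" and nv: "v \<notin> set (beta s lam)"
    and na: "a \<notin> set (beta s mu)" and nb: "b \<notin> set (beta s mu)"
    and o1: "u < b" and o2: "b < a" and o3: "a < v"
  shows "int (ribbon_len lam mu) = b - u \<and> beta s mu ! (head_row (skew lam mu) - 1) = u
     \<and> beta s mu ! (tail_row (skew mu lam) - 1) = v"
proof -
  define L where "L = beta s lam"
  define M where "M = beta s mu"
  define Bl where "Bl = set L"
  define Bm where "Bm = set M"
  have dL: "sorted_wrt (>) L" unfolding L_def by (rule beta_dec[OF pl])
  have dM: "sorted_wrt (>) M" unfolding M_def by (rule beta_dec[OF pm])
  have lenL: "length L = r" unfolding L_def using beta_len rl by simp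
  have lenM: "length M = r" unfolding M_def using beta_len rm by simp
  have U': "Bl \<union> {u, v} = Bm \<union> {a, b}" using U unfolding Bl_def Bm_def L_def M_def .
  have nu': "u \<notin> Bl" "v \<notin> Bl" "a \<notin> Bm" "b \<notin> Bm"
    using nu nv na nb unfolding Bl_def Bm_def L_def M_def by auto
  have cnt: "int (card {z \<in> Bl. w \<le> z}) + (if w \<le> u then 1 else 0) + (if w \<le> v then 1 else 0)
       = int (card {z \<in> Bm. w \<le> z}) + (if w \<le> a then 1 else 0) + (if w \<le> b then 1 else 0)" for w
    by (rule cnt_two) (use U' nu' o1 o2 o3 in \<open>auto simp: Bl_def Bm_def\<close>)
  have diff: "L ! i - M ! i = int (part lam (Suc i)) - int (part mu (Suc i))" if "i < r" for i
    using that beta_nth[of i lam s] beta_nth[of i mu s] rl rm unfolding L_def M_def by simp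
  have "u \<in> Bm \<union> {a, b}" "v \<in> Bm \<union> {a, b}" using U' by blast+
  then have uM: "u \<in> Bm" and vM: "v \<in> Bm" using o1 o2 o3 by auto
  have "b \<in> Bl \<union> {u, v}" using U' by blast
  then have bL: "b \<in> Bl" using o1 o2 o3 by auto
  have MI: "M ! i < L ! i \<longleftrightarrow> u \<le> M ! i \<and> M ! i < b" if "i < r" for i
  proof -
    have c1: "card {z \<in> Bm. M ! i + 1 \<le> z} = i"
    proof -
      have "{z \<in> Bm. M ! i + 1 \<le> z} = {z \<in> set M. M ! i < z}" unfolding Bm_def by auto
      then show ?thesis using dec_card_gt[OF dM, of i] that lenM by simp
    qed
    have c2: "M ! i < L ! i \<longleftrightarrow> i < card {z \<in> Bl. M ! i + 1 \<le> z}"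
      using dec_ge_iff[OF dL, of i "M ! i + 1"] that lenL unfolding Bl_def by (simp add: zless_iff_Suc_zadd[symmetric] add1_zle_eq)
    have "M ! i \<in> Bm" unfolding Bm_def using that lenM by simp
    then have "M ! i \<noteq> a" "M ! i \<noteq> b" using nu' by auto
    then show ?thesis using cnt[of "M ! i + 1"] c1 c2 o1 o2 o3 by (auto split: if_splits)
  qed
  have LI: "M ! i < L ! i \<longleftrightarrow> u < L ! i \<and> L ! i \<le> b" if "i < r" for i
  proof -
    have c1: "card {z \<in> Bl. L ! i \<le> z} = Suc i"
      using dec_card_ge[OF dL, of i] that lenL unfolding Bl_def by simp
    have c2: "L ! i \<le> M ! i \<longleftrightarrow> i < card {z \<in> Bm. L ! i \<le> z}"
      using dec_ge_iff[OF dM, of i "L ! i"] that lenM unfolding Bm_def by simp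
    have "L ! i \<in> Bl" unfolding Bl_def using that lenL by simp
    then have "L ! i \<noteq> u" "L ! i \<noteq> v" using nu' by auto
    then show ?thesis using cnt[of "L ! i"] c1 c2 o1 o2 o3 by (auto split: if_splits)
  qed
  have MJ: "L ! i < M ! i \<longleftrightarrow> a < M ! i \<and> M ! i \<le> v" if "i < r" for i
  proof -
    have c1: "card {z \<in> Bm. M ! i \<le> z} = Suc i"
      using dec_card_ge[OF dM, of i] that lenM unfolding Bm_def by simp
    have c2: "M ! i \<le> L ! i \<longleftrightarrow> i < card {z \<in> Bl. M ! i \<le> z}"
      using dec_ge_iff[OF dL, of i "M ! i"] that lenL unfolding Bl_def by simp
    have "M ! i \<in> Bm" unfolding Bm_def using that lenM by simp
    then have "M ! i \<noteq> a" "M ! i \<noteq> b" using nu' by auto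
    then show ?thesis using cnt[of "M ! i"] c1 c2 o1 o2 o3 by (auto split: if_splits)
  qed
  define I where "I = {i. i < r \<and> part mu (Suc i) < part lam (Suc i)}"
  define J where "J = {i. i < r \<and> part lam (Suc i) < part mu (Suc i)}"
  have I_eq: "I = {i. i < r \<and> M ! i < L ! i}" unfolding I_def using diff by force
  have J_eq: "J = {i. i < r \<and> L ! i < M ! i}" unfolding J_def using diff by force
  obtain q where q: "q < r" "M ! q = u" using uM lenM unfolding Bm_def by (auto simp: in_set_conv_nth)
  obtain p where p: "p < r" "M ! p = v" using vM lenM unfolding Bm_def by (auto simp: in_set_conv_nth)
  have finI: "finite I" unfolding I_def by simp
  have finJ: "finite J" unfolding J_def by simp
  have "Max (Suc ` I) = Suc q"
  proof (rule Max_eqI)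
    show "finite (Suc ` I)" using finI by simp
  next
    fix y assume "y \<in> Suc ` I"
    then obtain i where i: "i \<in> I" "y = Suc i" by auto
    then have "i < r" "u \<le> M ! i" using MI I_eq by auto
    then have "\<not> M ! i < M ! q" using q by simp
    then have "\<not> q < i" using dec_less_iff[OF dM, of i q] \<open>i < r\<close> q lenM by simp
    then show "y \<le> Suc q" using i by simp
  next
    show "Suc q \<in> Suc ` I" using q MI[of q] I_eq o1 by auto
  qed
  then have hr: "head_row (skew lam mu) = Suc q"
    unfolding head_row_def fst_skew[OF pl rl] I_def[symmetric] .
  have "Min (Suc ` J) = Suc p"
  proof (rule Min_eqI)
    show "finite (Suc ` J)" using finJ by simp
  next
    fix y assume "y \<in> Suc ` J"
    then obtain i where i: "i \<in> J" "y = Suc i" by auto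
    then have "i < r" "M ! i \<le> v" using MJ J_eq by auto
    then have "\<not> M ! p < M ! i" using p by simp
    then have "\<not> i < p" using dec_less_iff[OF dM, of p i] \<open>i < r\<close> p lenM by simp
    then show "Suc p \<le> y" using i by simp
  next
    show "Suc p \<in> Suc ` J" using p MJ[of p] J_eq o3 by auto
  qed
  then have tr: "tail_row (skew mu lam) = Suc p"
    unfolding tail_row_def fst_skew[OF pm rm] J_def[symmetric] .
  have "int (ribbon_len lam mu) = (\<Sum>i\<in>I. int (part lam (Suc i) - part mu (Suc i)))"
    unfolding ribbon_len_def card_skew[OF pl rl] I_def[symmetric] by simp
  also have "\<dots> = (\<Sum>i\<in>I. L ! i - M ! i)"
    by (rule sum.cong) (auto simp: I_def diff of_nat_diff)
  also have "\<dots> = (\<Sum>i\<in>I. L ! i) - (\<Sum>i\<in>I. M ! i)" by (simp add: sum_subtractf)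
  also have "(\<Sum>i\<in>I. L ! i) = (\<Sum>z\<in>(!) L ` I. z)"
  proof (rule sum.reindex[symmetric, unfolded comp_def])
    show "inj_on ((!) L) I"
      by (rule inj_on_subset[OF dec_inj[OF dL]]) (auto simp: I_def lenL)
  qed
  also have "(\<Sum>i\<in>I. M ! i) = (\<Sum>z\<in>(!) M ` I. z)"
  proof (rule sum.reindex[symmetric, unfolded comp_def])
    show "inj_on ((!) M) I"
      by (rule inj_on_subset[OF dec_inj[OF dM]]) (auto simp: I_def lenM)
  qed
  also have "(!) L ` I = {z \<in> Bl. u < z \<and> z \<le> b}"
  proof
    show "(!) L ` I \<subseteq> {z \<in> Bl. u < z \<and> z \<le> b}"
      using LI lenL unfolding I_eq Bl_def by auto
  next
    show "{z \<in> Bl. u < z \<and> z \<le> b} \<subseteq> (!) L ` I"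
    proof
      fix z assume "z \<in> {z \<in> Bl. u < z \<and> z \<le> b}"
      then obtain j where "j < r" "z = L ! j" "u < L ! j" "L ! j \<le> b"
        unfolding Bl_def using lenL by (auto simp: in_set_conv_nth)
      then show "z \<in> (!) L ` I" using LI[of j] I_eq by auto
    qed
  qed
  also have "(!) M ` I = {z \<in> Bm. u \<le> z \<and> z < b}"
  proof
    show "(!) M ` I \<subseteq> {z \<in> Bm. u \<le> z \<and> z < b}"
      using MI lenM unfolding I_eq Bm_def by auto
  next
    show "{z \<in> Bm. u \<le> z \<and> z < b} \<subseteq> (!) M ` I"
    proof
      fix z assume "z \<in> {z \<in> Bm. u \<le> z \<and> z < b}"
      then obtain j where "j < r" "z = M ! j" "u \<le> M ! j" "M ! j < b"
        unfolding Bm_def using lenM by (auto simp: in_set_conv_nth)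
      then show "z \<in> (!) M ` I" using MI[of j] I_eq by auto
    qed
  qed
  finally have rib: "int (ribbon_len lam mu) = (\<Sum>z\<in>{z \<in> Bl. u < z \<and> z \<le> b}. z) - (\<Sum>z\<in>{z \<in> Bm. u \<le> z \<and> z < b}. z)" .
  define C where "C = {z \<in> Bm. u < z \<and> z < b}"
  have e1: "{z \<in> Bl. u < z \<and> z \<le> b} = insert b C"
  proof
    show "{z \<in> Bl. u < z \<and> z \<le> b} \<subseteq> insert b C"
    proof
      fix z assume z: "z \<in> {z \<in> Bl. u < z \<and> z \<le> b}"
      show "z \<in> insert b C"
      proof (cases "z = b")
        case False
        then have "z \<in> Bm \<union> {a, b}" using U' z by auto
        then show ?thesis using z False o2 unfolding C_def by auto
      qed simp
    qed
  next
    show "insert b C \<subseteq> {z \<in> Bl. u < z \<and> z \<le> b}"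
    proof
      fix z assume z: "z \<in> insert b C"
      show "z \<in> {z \<in> Bl. u < z \<and> z \<le> b}"
      proof (cases "z = b")
        case False
        then have "z \<in> Bl \<union> {u, v}" using U' z unfolding C_def by auto
        then show ?thesis using z False o2 o3 unfolding C_def by auto
      qed (use bL o1 in auto)
    qed
  qed
  have e2: "{z \<in> Bm. u \<le> z \<and> z < b} = insert u C" unfolding C_def using uM o1 by auto
  have finC: "finite C" unfolding C_def Bm_def by simp
  have "b \<notin> C" "u \<notin> C" unfolding C_def by auto
  then have "int (ribbon_len lam mu) = b - u" using rib e1 e2 finC by simp
  then show ?thesis using hr tr q p unfolding M_def by simp
qed

definition before :: "int list \<Rightarrow> int \<Rightarrow> int \<Rightarrow> bool" where
  "before kk y x \<longleftrightarrow> (\<exists>p q. p < q \<and> q < length kk \<and> kk ! p = y \<and> kk ! q = x)"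

lemma swp_len[simp]: "length (swp kk i) = length kk" unfolding swp_def by simp

lemma swp_set: "Suc i < length kk \<Longrightarrow> set (swp kk i) = set kk"
  unfolding swp_def by (simp add: set_swap)

lemma swp_distinct: "Suc i < length kk \<Longrightarrow> distinct (swp kk i) = distinct kk"
  unfolding swp_def by simp

lemma before_swp:
  assumes "before kk y x" "x < y" "kk ! i \<le> kk ! Suc i" "Suc i < length kk"
  shows "before (swp kk i) y x"
proof -
  obtain p q where pq: "p < q" "q < length kk" "kk ! p = y" "kk ! q = x"
    using assms(1) unfolding before_def by blast
  define f where "f j = (if j = i then Suc i else if j = Suc i then i else j)" for j
  have nth: "swp kk i ! f j = kk ! j" if "j < length kk" for j
    using that assms(4) unfolding swp_def f_def by (auto simp: nth_list_update)
  have "f p < f q"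
  proof -
    have "\<not> (p = i \<and> q = Suc i)" using pq assms(2,3) by auto
    then show ?thesis using pq(1) unfolding f_def by auto
  qed
  moreover have "f q < length kk" using pq(2) assms(4) unfolding f_def by auto
  ultimately show ?thesis unfolding before_def
    using nth[of p] nth[of q] pq by (intro exI[of _ "f p"] exI[of _ "f q"]) auto
qed

lemma before_both:
  assumes "distinct kk" "before kk y x" "before kk x y"
  shows False
proof -
  obtain p q where pq: "p < q" "q < length kk" "kk ! p = y" "kk ! q = x"
    using assms(2) unfolding before_def by blast
  obtain p' q' where pq': "p' < q'" "q' < length kk" "kk ! p' = x" "kk ! q' = y"
    using assms(3) unfolding before_def by blast
  have "p = q'" using pq pq' assms(1) nth_eq_iff_index_eq by (metis order.strict_trans)
  moreover have "q = p'" using pq pq' assms(1) nth_eq_iff_index_eq by (metis order.strict_trans)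
  ultimately show False using pq pq' by simp
qed

lemma set_upd2:
  assumes "distinct K" "Suc i < length K"
  shows "set (K[i := a, Suc i := b]) = (set K - {K ! i, K ! Suc i}) \<union> {a, b}"
proof
  show "set (K[i := a, Suc i := b]) \<subseteq> (set K - {K ! i, K ! Suc i}) \<union> {a, b}"
  proof
    fix z assume "z \<in> set (K[i := a, Suc i := b])"
    then obtain j where j: "j < length K" "K[i := a, Suc i := b] ! j = z" by (auto simp: in_set_conv_nth)
    show "z \<in> (set K - {K ! i, K ! Suc i}) \<union> {a, b}"
    proof (cases "j = i \<or> j = Suc i")
      case True then show ?thesis using j assms by (auto simp: nth_list_update)
    next
      case False
      then have "z = K ! j" using j by (auto simp: nth_list_update)
      moreover have "K ! j \<noteq> K ! i" "K ! j \<noteq> K ! Suc i"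
        using False j assms nth_eq_iff_index_eq by (metis Suc_lessD)+
      ultimately show ?thesis using j by auto
    qed
  qed
next
  show "(set K - {K ! i, K ! Suc i}) \<union> {a, b} \<subseteq> set (K[i := a, Suc i := b])"
  proof
    fix z assume z: "z \<in> (set K - {K ! i, K ! Suc i}) \<union> {a, b}"
    show "z \<in> set (K[i := a, Suc i := b])"
    proof (cases "z \<in> {a, b}")
      case True
      have "K[i := a, Suc i := b] ! i = a" "K[i := a, Suc i := b] ! Suc i = b" using assms by (auto simp: nth_list_update)
      then show ?thesis using True assms by (metis Suc_lessD empty_iff insert_iff length_list_update nth_mem)
    next
      case False
      then obtain j where j: "j < length K" "K ! j = z" "j \<noteq> i" "j \<noteq> Suc i" using z by (auto simp: in_set_conv_nth)
      then have "K[i := a, Suc i := b] ! j = z" by (simp add: nth_list_update)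
      then show ?thesis using j by (metis length_list_update nth_mem)
    qed
  qed
qed

lemma analysis:
  assumes n: "1 \<le> n" and l: "1 \<le> l" and g: "good_seq n l s lam mu ks"
    and dL: "sorted_wrt (>) (beta s lam)" and dM: "sorted_wrt (>) (beta s mu)"
    and lL: "length (beta s lam) = r" and lM: "length (beta s mu) = r"
  obtains e i k1 k2 a b sh j0 where
    "Suc e < length ks"
    "{j. Suc j < length ks \<and> step_label n l (ks ! j) (ks ! Suc j) \<noteq> 0} = {e}"
    "\<forall>j. Suc j < length ks \<longrightarrow> wstep n l (ks ! j) (ks ! Suc j)"
    "\<forall>j. Suc j < length ks \<and> j \<noteq> e \<longrightarrow> ks ! Suc j = swp (ks ! j) (first_nondesc (ks ! j))"
    "\<forall>j<length ks. length (ks ! j) = r"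
    "distinct (ks ! e)"
    "i = first_nondesc (ks ! e)" "Suc i < r"
    "ks ! e ! i = k1" "ks ! e ! Suc i = k2"
    "ks ! Suc e = (ks ! e)[i := a, Suc i := b]"
    "k1 < b" "b < a" "a < k2"
    "set (beta s lam) \<union> {k1, k2} = set (beta s mu) \<union> {a, b}"
    "k1 \<notin> set (beta s lam)" "k2 \<notin> set (beta s lam)" "a \<notin> set (beta s mu)" "b \<notin> set (beta s mu)"
    "rule_idx n l k1 k2 \<noteq> 1" "step_label n l (ks ! e) (ks ! Suc e) = rule_idx n l k1 k2"
    "sh \<in> {0, gam' n l k1 k2, del' n l k1 k2, gam' n l k1 k2 + del' n l k1 k2}"
    "b = k1 + sh + int n * int l * int j0"
proof -
  define L where "L = beta s lam"
  define M where "M = beta s mu"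
  have g': "ks \<noteq> []" "hd ks = rev M" "last ks = L"
     "\<forall>j. Suc j < length ks \<longrightarrow> wstep n l (ks ! j) (ks ! Suc j)"
     "card {j. Suc j < length ks \<and> step_label n l (ks ! j) (ks ! Suc j) \<noteq> 0} = 1"
    using g unfolding good_seq_def L_def M_def by auto
  obtain e where Z: "{j. Suc j < length ks \<and> step_label n l (ks ! j) (ks ! Suc j) \<noteq> 0} = {e}"
    using g'(5) by (rule card_1_singletonE)
  have eZ: "Suc e < length ks" "step_label n l (ks ! e) (ks ! Suc e) \<noteq> 0" using Z by auto
  have W: "\<forall>j. Suc j < length ks \<longrightarrow> wstep n l (ks ! j) (ks ! Suc j)" by (fact g'(4))
  have SW: "\<forall>j. Suc j < length ks \<and> j \<noteq> e \<longrightarrow> ks ! Suc j = swp (ks ! j) (first_nondesc (ks ! j))"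
  proof (intro allI impI)
    fix j assume j: "Suc j < length ks \<and> j \<noteq> e"
    then have "step_label n l (ks ! j) (ks ! Suc j) = 0" using Z by blast
    then show "ks ! Suc j = swp (ks ! j) (first_nondesc (ks ! j))"
      using label_zero_iff W j by blast
  qed
  have ks0: "ks ! 0 = rev M" using g'(1,2) by (simp add: hd_conv_nth)
  have LEN: "\<forall>j<length ks. length (ks ! j) = r"
  proof (intro allI impI)
    fix j show "j < length ks \<Longrightarrow> length (ks ! j) = r"
    proof (induction j)
      case 0 then show ?case using ks0 lM M_def by simp
    next
      case (Suc j) then show ?case using wstep_facts[of n l "ks ! j" "ks ! Suc j"] W by simp
    qed
  qed
  have PRE: "set (ks ! j) = set M \<and> distinct (ks ! j)" if "j \<le> e" for j
    using that
  proof (induction j)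
    case 0 then show ?case using ks0 dec_distinct[OF dM] M_def by simp
  next
    case (Suc j)
    then have "Suc j < length ks" "j \<noteq> e" using eZ by auto
    then have "ks ! Suc j = swp (ks ! j) (first_nondesc (ks ! j))"
      "Suc (first_nondesc (ks ! j)) < length (ks ! j)"
      using SW W wstep_facts by blast+
    then show ?case using Suc swp_set swp_distinct by simp
  qed
  have POST: "set (ks ! (Suc e + d)) = set (ks ! Suc e)" if "Suc e + d < length ks" for d
    using that
  proof (induction d)
    case 0 then show ?case by simp
  next
    case (Suc d)
    let ?j = "Suc e + d"
    have "Suc ?j < length ks" "?j \<noteq> e" using Suc by auto
    then have "ks ! Suc ?j = swp (ks ! ?j) (first_nondesc (ks ! ?j))"
      "Suc (first_nondesc (ks ! ?j)) < length (ks ! ?j)"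
      using SW W wstep_facts by blast+
    then show ?case using Suc swp_set by simp
  qed
  have "set (ks ! Suc e) = set L"
  proof -
    have eq: "Suc e + (length ks - 1 - Suc e) = length ks - 1" using eZ by simp
    have "set (ks ! (length ks - 1)) = set (ks ! Suc e)" using POST[of "length ks - 1 - Suc e"] eZ
      unfolding eq by simp
    then show ?thesis using g'(1,3) by (simp add: last_conv_nth)
  qed
  define K where "K = ks ! e"
  define i where "i = first_nondesc K"
  have wf: "Suc i < length K" "K ! i \<le> K ! Suc i"
     "ks ! Suc e = K[i := ks ! Suc e ! i, Suc i := ks ! Suc e ! Suc i]"
     "straight_coeff n l (K ! i) (K ! Suc i) (ks ! Suc e ! i) (ks ! Suc e ! Suc i) \<noteq> 0"
    using wstep_facts[of n l K "ks ! Suc e"] W eZ unfolding K_def i_def by auto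
  define k1 where "k1 = K ! i"
  define k2 where "k2 = K ! Suc i"
  define a where "a = ks ! Suc e ! i"
  define b where "b = ks ! Suc e ! Suc i"
  have Kd: "distinct K" "set K = set M" using PRE[of e] K_def by auto
  have lK: "length K = r" using LEN eZ K_def by simp
  have "k1 \<noteq> k2" unfolding k1_def k2_def using Kd wf(1) nth_eq_iff_index_eq by (metis Suc_lessD n_not_Suc_n)
  then have k12: "k1 < k2" using wf(2) k1_def k2_def by simp
  have ln: "step_label n l K (ks ! Suc e) = rule_idx n l k1 k2" "\<not> (a = k2 \<and> b = k1)"
    using label_nz[of n l K "ks ! Suc e"] W eZ unfolding K_def i_def k1_def k2_def a_def b_def by auto
  obtain sh j0 where cz: "rule_idx n l k1 k2 \<noteq> 1"
     "sh \<in> {0, gam' n l k1 k2, del' n l k1 k2, gam' n l k1 k2 + del' n l k1 k2}"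
     "0 < sh + int n * int l * int j0" "a = k2 - sh - int n * int l * int j0"
     "b = k1 + sh + int n * int l * int j0" "b < a"
    using coeff_nz[OF n l _ ln(2)] wf(4) unfolding k1_def k2_def a_def b_def by blast
  have o: "k1 < b" "b < a" "a < k2" using cz by auto
  have f11: "ks ! Suc e = K[i := a, Suc i := b]" using wf(3) unfolding a_def b_def .
  have "set L = set (K[i := a, Suc i := b])" using \<open>set (ks ! Suc e) = set L\<close> f11 by simp
  then have SL: "set L = (set M - {k1, k2}) \<union> {a, b}"
    using set_upd2[OF Kd(1) wf(1)] Kd(2) unfolding k1_def k2_def by simp
  have kM: "k1 \<in> set M" "k2 \<in> set M" using Kd(2) wf(1) unfolding k1_def k2_def
    by (metis Suc_lessD nth_mem)+
  have cM: "card (set M) = r" using dec_distinct[OF dM] lM M_def by (simp add: distinct_card)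
  have cL: "card (set L) = r" using dec_distinct[OF dL] lL L_def by (simp add: distinct_card)
  have cD: "card (set M - {k1, k2}) = r - 2"
    using cM kM \<open>k1 < k2\<close> by (simp add: card_Diff_subset)
  have aM: "a \<notin> set M"
  proof
    assume "a \<in> set M"
    then have "set L = insert b (set M - {k1, k2})" using SL o by auto
    then have "card (set L) \<le> Suc (r - 2)" using cD by (simp add: card_insert_if)
    moreover have "2 \<le> r" using wf(1) lK by simp
    ultimately show False using cL by simp
  qed
  have bM: "b \<notin> set M"
  proof
    assume "b \<in> set M"
    then have "set L = insert a (set M - {k1, k2})" using SL o by auto
    then have "card (set L) \<le> Suc (r - 2)" using cD by (simp add: card_insert_if)
    moreover have "2 \<le> r" using wf(1) lK by simp
    ultimately show False using cL by simp
  qed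
  have kL: "k1 \<notin> set L" "k2 \<notin> set L" using SL o by auto
  have UU: "set L \<union> {k1, k2} = set M \<union> {a, b}" using SL kM by auto
  have f6: "distinct (ks ! e)" using Kd(1) unfolding K_def .
  have f7: "i = first_nondesc (ks ! e)" unfolding i_def K_def ..
  have f8: "Suc i < r" using wf(1) lK by simp
  have f9: "ks ! e ! i = k1" "ks ! e ! Suc i = k2" unfolding k1_def k2_def K_def by simp_all
  note f11 = f11[unfolded K_def]
  have f15: "set (beta s lam) \<union> {k1, k2} = set (beta s mu) \<union> {a, b}" using UU unfolding L_def M_def .
  have f16: "k1 \<notin> set (beta s lam)" "k2 \<notin> set (beta s lam)" "a \<notin> set (beta s mu)" "b \<notin> set (beta s mu)"
    using kL aM bM unfolding L_def M_def by auto
  have f21: "step_label n l (ks ! e) (ks ! Suc e) = rule_idx n l k1 k2" using ln(1) unfolding K_def .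
  show ?thesis
    by (rule that[OF eZ(1) Z W SW LEN f6 f7 f8 f9 f11 o UU[unfolded L_def M_def] f16 cz(1) f21 cz(2) cz(5)])
qed

lemma no_earlier:
  assumes W: "\<forall>j. Suc j < length ks \<longrightarrow> wstep n l (ks ! j) (ks ! Suc j)"
    and SW: "\<forall>j. Suc j < length ks \<and> j \<noteq> e \<longrightarrow> ks ! Suc j = swp (ks ! j) (first_nondesc (ks ! j))"
    and e: "Suc e < length ks" and d: "distinct (ks ! e)" and ib: "Suc i < length (ks ! e)"
    and k: "ks ! e ! i = k1" "ks ! e ! Suc i = k2" "k1 < k2"
    and e': "e' < e" "first_nondesc (ks ! e') = i'" "ks ! e' ! i' = k1" "ks ! e' ! Suc i' = k2"
  shows False
proof -
  have w': "Suc i' < length (ks ! e')" using wstep_facts[of n l "ks ! e'" "ks ! Suc e'"] W e e' by auto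
  have s': "ks ! Suc e' = swp (ks ! e') i'" using SW e e' by auto
  have b0: "before (ks ! Suc e') k2 k1" unfolding before_def s'
    using w' e' by (intro exI[of _ i'] exI[of _ "Suc i'"]) (auto simp: swp_def nth_list_update)
  have bd: "before (ks ! (Suc e' + dk)) k2 k1" if "Suc e' + dk \<le> e" for dk
    using that
  proof (induction dk)
    case 0 then show ?case using b0 by simp
  next
    case (Suc dk)
    let ?j = "Suc e' + dk"
    have j: "Suc ?j < length ks" "?j \<noteq> e" using Suc.prems e by auto
    then have "ks ! Suc ?j = swp (ks ! ?j) (first_nondesc (ks ! ?j))" using SW by blast
    moreover have "Suc (first_nondesc (ks ! ?j)) < length (ks ! ?j)"
      "ks ! ?j ! first_nondesc (ks ! ?j) \<le> ks ! ?j ! Suc (first_nondesc (ks ! ?j))"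
      using wstep_facts[of n l "ks ! ?j" "ks ! Suc ?j"] W j by auto
    ultimately show ?case using before_swp[of "ks ! ?j" k2 k1] Suc k(3) by simp
  qed
  have "before (ks ! e) k2 k1" using bd[of "e - Suc e'"] e' by simp
  moreover have "before (ks ! e) k1 k2" unfolding before_def using ib k
    by (intro exI[of _ i] exI[of _ "Suc i"]) auto
  ultimately show False using before_both d by blast
qed

lemma no_step_dec:
  assumes "sorted_wrt (>) X"
  shows "\<not> wstep n l X Y"
proof
  assume "wstep n l X Y"
  then obtain i where "Suc i < length X" "X ! i \<le> X ! Suc i" unfolding wstep_def by blast
  then show False using assms by (simp add: sorted_wrt_iff_nth_less) (meson leD lessI)
qed

theorem mainTheorem16:
  fixes n l m :: nat and sl :: "int list"
    and bl bm :: "nat list list" and lam mu :: "nat list"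
    and r :: nat and ks :: "int list list" and e t :: nat
  assumes "1 \<le> n" and "1 \<le> l" and "1 \<le> m" and "length sl = l"
    \<comment> \<open>hypothesis (H)\<close>
    and "bl \<in> multipartitions l m" and "bm \<in> multipartitions l m"
    and "corr n l sl bl lam" and "corr n l sl bm mu"
    and "mp_prec n l sl bl bm"
    and "psize lam = r" and "psize mu = r"
    and "int (card (set (beta (sum_list sl) lam) \<inter> set (beta (sum_list sl) mu))) = int r - 2"
    \<comment> \<open>a good sequence whose unique step with m = 1 is the e-th one, via rule (R_t)\<close>
    and "good_seq n l (sum_list sl) lam mu ks"
    and "Suc e < length ks"
    and "step_label n l (ks ! e) (ks ! Suc e) = t" and "t \<noteq> 0"
  shows
    "(\<forall>ks'. good_seq n l (sum_list sl) lam mu ks' \<longrightarrow> ks' = ks)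
     \<and> (\<forall>ks' e'. good_seq n l (sum_list sl) lam mu ks' \<and> Suc e' < length ks'
            \<and> step_label n l (ks' ! e') (ks' ! Suc e') \<noteq> 0
            \<longrightarrow> step_label n l (ks' ! e') (ks' ! Suc e') = t)
     \<and> (let s = sum_list sl; N = int n * int l;
            h = ribbon_len lam mu;
            x = head_row (skew lam mu); y = tail_row (skew mu lam);
            bx = beta s mu ! (x - 1); by' = beta s mu ! (y - 1);
            \<gamma> = (cc n by' - cc n bx) mod N;
            \<delta> = (int n * (dd n l by' - dd n l bx)) mod N
        in (\<gamma>, \<delta>) \<noteq> (0, 0)
           \<and> (\<exists>\<eta>\<in>{0, \<gamma>, \<delta>, \<gamma> + \<delta>}. int h mod N = \<eta> mod N))"
proof -
  define s where "s = sum_list sl"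
  define L where "L = beta s lam"
  define M where "M = beta s mu"
  have pl: "is_partition lam" using assms(7) unfolding corr_def by simp
  have pm: "is_partition mu" using assms(8) unfolding corr_def by simp
  have dL: "sorted_wrt (>) L" unfolding L_def by (rule beta_dec[OF pl])
  have dM: "sorted_wrt (>) M" unfolding M_def by (rule beta_dec[OF pm])
  have lL: "length L = r" unfolding L_def using beta_len assms(10) by simp
  have lM: "length M = r" unfolding M_def using beta_len assms(11) by simp
  have n: "1 \<le> n" and l: "1 \<le> l" using assms by auto
  have good: "good_seq n l s lam mu ks" using assms(13) unfolding s_def .
  obtain e0 i k1 k2 a b sh j0 where
    A: "Suc e0 < length ks"
    "{j. Suc j < length ks \<and> step_label n l (ks ! j) (ks ! Suc j) \<noteq> 0} = {e0}"
    "\<forall>j. Suc j < length ks \<longrightarrow> wstep n l (ks ! j) (ks ! Suc j)"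
    "\<forall>j. Suc j < length ks \<and> j \<noteq> e0 \<longrightarrow> ks ! Suc j = swp (ks ! j) (first_nondesc (ks ! j))"
    "\<forall>j<length ks. length (ks ! j) = r"
    "distinct (ks ! e0)"
    "i = first_nondesc (ks ! e0)" "Suc i < r"
    "ks ! e0 ! i = k1" "ks ! e0 ! Suc i = k2"
    "ks ! Suc e0 = (ks ! e0)[i := a, Suc i := b]"
    "k1 < b" "b < a" "a < k2"
    "set (beta s lam) \<union> {k1, k2} = set (beta s mu) \<union> {a, b}"
    "k1 \<notin> set (beta s lam)" "k2 \<notin> set (beta s lam)" "a \<notin> set (beta s mu)" "b \<notin> set (beta s mu)"
    "rule_idx n l k1 k2 \<noteq> 1" "step_label n l (ks ! e0) (ks ! Suc e0) = rule_idx n l k1 k2"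
    "sh \<in> {0, gam' n l k1 k2, del' n l k1 k2, gam' n l k1 k2 + del' n l k1 k2}"
    "b = k1 + sh + int n * int l * int j0"
    using analysis[OF n l good dL[unfolded L_def] dM[unfolded M_def] lL[unfolded L_def] lM[unfolded M_def]]
    by blast
  have ee: "e = e0" using A(2) assms(14,15,16) by blast
  have tt: "t = rule_idx n l k1 k2" using A(21) assms(15) ee by simp
  have DM: "set M - set L = {k1, k2}" using A(15,16,17) A(12,13,14) unfolding L_def M_def by auto
  have DL: "set L - set M = {a, b}" using A(15,18,19) A(12,13,14) unfolding L_def M_def by auto
  have ks0: "ks ! 0 = rev M" using good unfolding good_seq_def M_def by (metis hd_conv_nth)
  have lastks: "ks ! (length ks - 1) = L" using good unfolding good_seq_def L_def by (metis last_conv_nth)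
  have UNIQ: "ks' = ks" if g': "good_seq n l s lam mu ks'" for ks'
  proof -
    obtain e' i' k1' k2' a' b' sh' j0' where
      B: "Suc e' < length ks'"
      "{j. Suc j < length ks' \<and> step_label n l (ks' ! j) (ks' ! Suc j) \<noteq> 0} = {e'}"
      "\<forall>j. Suc j < length ks' \<longrightarrow> wstep n l (ks' ! j) (ks' ! Suc j)"
      "\<forall>j. Suc j < length ks' \<and> j \<noteq> e' \<longrightarrow> ks' ! Suc j = swp (ks' ! j) (first_nondesc (ks' ! j))"
      "\<forall>j<length ks'. length (ks' ! j) = r"
      "distinct (ks' ! e')"
      "i' = first_nondesc (ks' ! e')" "Suc i' < r"
      "ks' ! e' ! i' = k1'" "ks' ! e' ! Suc i' = k2'"
      "ks' ! Suc e' = (ks' ! e')[i' := a', Suc i' := b']"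
      "k1' < b'" "b' < a'" "a' < k2'"
      "set (beta s lam) \<union> {k1', k2'} = set (beta s mu) \<union> {a', b'}"
      "k1' \<notin> set (beta s lam)" "k2' \<notin> set (beta s lam)" "a' \<notin> set (beta s mu)" "b' \<notin> set (beta s mu)"
      "rule_idx n l k1' k2' \<noteq> 1" "step_label n l (ks' ! e') (ks' ! Suc e') = rule_idx n l k1' k2'"
      "sh' \<in> {0, gam' n l k1' k2', del' n l k1' k2', gam' n l k1' k2' + del' n l k1' k2'}"
      "b' = k1' + sh' + int n * int l * int j0'"
      using analysis[OF n l g' dL[unfolded L_def] dM[unfolded M_def] lL[unfolded L_def] lM[unfolded M_def]]
      by blast
    have DM': "set M - set L = {k1', k2'}" using B(15,16,17) B(12,13,14) unfolding L_def M_def by auto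
    have DL': "set L - set M = {a', b'}" using B(15,18,19) B(12,13,14) unfolding L_def M_def by auto
    have kk: "k1' = k1 \<and> k2' = k2" using DM DM' A(12,13,14) B(12,13,14)
      by (metis doubleton_eq_iff order.strict_trans not_less_iff_gr_or_eq)
    have aa: "a' = a \<and> b' = b" using DL DL' A(12,13,14) B(12,13,14)
      by (metis doubleton_eq_iff not_less_iff_gr_or_eq)
    have ks0': "ks' ! 0 = rev M" using g' unfolding good_seq_def M_def by (metis hd_conv_nth)
    have lastks': "ks' ! (length ks' - 1) = L" using g' unfolding good_seq_def L_def by (metis last_conv_nth)
    have PRE: "ks ! j = ks' ! j" if "j \<le> e0" "j \<le> e'" for j
      using that
    proof (induction j)
      case 0 then show ?case using ks0 ks0' by simp
    next
      case (Suc j)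
      then have "ks ! Suc j = swp (ks ! j) (first_nondesc (ks ! j))"
        "ks' ! Suc j = swp (ks' ! j) (first_nondesc (ks' ! j))"
        using A(1,4) B(1,4) by auto
      then show ?case using Suc by simp
    qed
    have "e0 = e'"
    proof (rule ccontr)
      assume "e0 \<noteq> e'"
      then consider "e' < e0" | "e0 < e'" by linarith
      then show False
      proof cases
        case 1
        show False
          by (rule no_earlier[OF A(3,4,1,6), of i k1 k2 e' i'])
             (use A B kk PRE[of e'] 1 in auto)
      next
        case 2
        show False
          by (rule no_earlier[OF B(3,4,1,6), of i' k1 k2 e0 i])
             (use A B kk PRE[of e0] 2 in auto)
      qed
    qed
    have POST: "ks ! (Suc e0 + dk) = ks' ! (Suc e0 + dk)"
      if "Suc e0 + dk < length ks" "Suc e0 + dk < length ks'" for dk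
      using that
    proof (induction dk)
      case 0
      have "ks ! e0 = ks' ! e0" using PRE \<open>e0 = e'\<close> by simp
      then show ?case using A(7,11) B(7,11) aa \<open>e0 = e'\<close> by simp
    next
      case (Suc dk)
      let ?j = "Suc e0 + dk"
      have "ks ! Suc ?j = swp (ks ! ?j) (first_nondesc (ks ! ?j))"
        "ks' ! Suc ?j = swp (ks' ! ?j) (first_nondesc (ks' ! ?j))"
        using A(4) B(4) Suc.prems \<open>e0 = e'\<close> by auto
      then show ?case using Suc by simp
    qed
    have POST': "ks ! j = ks' ! j" if "e0 < j" "j < length ks" "j < length ks'" for j
      using POST[of "j - Suc e0"] that by simp
    have "length ks = length ks'"
    proof (rule ccontr)
      assume "length ks \<noteq> length ks'"
      then consider "length ks < length ks'" | "length ks' < length ks" by linarith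
      then show False
      proof cases
        case 1
        let ?j = "length ks - 1"
        have "ks' ! ?j = L" using POST'[of ?j] A(1) 1 lastks by simp
        moreover have "wstep n l (ks' ! ?j) (ks' ! Suc ?j)" using B(3) 1 A(1) by simp
        ultimately show False using no_step_dec[OF dL] by simp
      next
        case 2
        let ?j = "length ks' - 1"
        have "ks ! ?j = L" using POST'[of ?j] B(1) 2 lastks' \<open>e0 = e'\<close> by simp
        moreover have "wstep n l (ks ! ?j) (ks ! Suc ?j)" using A(3) 2 B(1) by simp
        ultimately show False using no_step_dec[OF dL] by simp
      qed
    qed
    show "ks' = ks"
    proof (rule nth_equalityI)
      show "length ks' = length ks" using \<open>length ks = length ks'\<close> by simp
    next
      fix j assume "j < length ks'"
      then show "ks' ! j = ks ! j" using PRE[of j] POST'[of j] \<open>e0 = e'\<close> \<open>length ks = length ks'\<close>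
        by (cases "j \<le> e0") auto
    qed
  qed
  have C1: "\<forall>ks'. good_seq n l (sum_list sl) lam mu ks' \<longrightarrow> ks' = ks" using UNIQ unfolding s_def by blast
  have C2: "\<forall>ks' e'. good_seq n l (sum_list sl) lam mu ks' \<and> Suc e' < length ks'
            \<and> step_label n l (ks' ! e') (ks' ! Suc e') \<noteq> 0
            \<longrightarrow> step_label n l (ks' ! e') (ks' ! Suc e') = t"
  proof (intro allI impI)
    fix ks' e' assume h: "good_seq n l (sum_list sl) lam mu ks' \<and> Suc e' < length ks'
            \<and> step_label n l (ks' ! e') (ks' ! Suc e') \<noteq> 0"
    then have "ks' = ks" using C1 by blast
    then have "e' = e0" using h A(2) by blast
    then show "step_label n l (ks' ! e') (ks' ! Suc e') = t" using A(21) tt \<open>ks' = ks\<close> by simp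
  qed
  have G: "int (ribbon_len lam mu) = b - k1 \<and> beta s mu ! (head_row (skew lam mu) - 1) = k1
     \<and> beta s mu ! (tail_row (skew mu lam) - 1) = k2"
    by (rule geom[OF pl pm assms(10,11) A(15) A(16,17,18,19) A(12,13,14)])
  have gd: "(gam' n l k1 k2, del' n l k1 k2) \<noteq> (0, 0)" using A(20) unfolding rule_idx_def by auto
  have hm: "int (ribbon_len lam mu) mod (int n * int l) = sh mod (int n * int l)"
    using G A(23) by simp
  have C3: "let s = sum_list sl; N = int n * int l;
            h = ribbon_len lam mu;
            x = head_row (skew lam mu); y = tail_row (skew mu lam);
            bx = beta s mu ! (x - 1); by' = beta s mu ! (y - 1);
            \<gamma> = (cc n by' - cc n bx) mod N;
            \<delta> = (int n * (dd n l by' - dd n l bx)) mod N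
        in (\<gamma>, \<delta>) \<noteq> (0, 0)
           \<and> (\<exists>\<eta>\<in>{0, \<gamma>, \<delta>, \<gamma> + \<delta>}. int h mod N = \<eta> mod N)"
  proof -
    have xg: "(cc n (beta s mu ! (tail_row (skew mu lam) - 1)) - cc n (beta s mu ! (head_row (skew lam mu) - 1))) mod (int n * int l) = gam' n l k1 k2"
      using G unfolding gam'_def by simp
    have xd: "(int n * (dd n l (beta s mu ! (tail_row (skew mu lam) - 1)) - dd n l (beta s mu ! (head_row (skew lam mu) - 1)))) mod (int n * int l) = del' n l k1 k2"
      using G unfolding del'_def by simp
    show ?thesis unfolding Let_def s_def[symmetric] xg xd
      by (intro conjI gd bexI[of _ sh] hm A(22))
  qed
  show ?thesis using C1 C2 C3 by blast
qed

end
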